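(* Let $\mathcal{C},\mathcal{C}'$ be generalized categories. The following two conditions are equivalent, and if either holds then $\mathcal{C}$ and $\mathcal{C}'$ are equivalent (i.e. their categories of invertibles $\tilde{\mathcal{C}}$ and $\tilde{\mathcal{C}'}$ are isomorphic): (1) there are functors $F:\mathcal{C}\to\mathcal{C}'$ and $G:\mathcal{C}'\to\mathcal{C}$ such that the induced maps $\tilde F:\tilde{\mathcal{C}}\to\tilde{\mathcal{C}'}$ and $\tilde G:\tilde{\mathcal{C}'}\to\tilde{\mathcal{C}}$ are mutually inverse; (2) there are functors $F:\mathcal{C}\to\mathcal{C}'$ and $G:\mathcal{C}'\to\mathcal{C}$ with $F\circ G\cong\mathrm{id}_{\mathcal{C}'}$ and $G\circ F\cong\mathrm{id}_{\mathcal{C}}$.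
   Context: A generalized category is a tuple $(\mathcal{C},\le,s,t,\cdot)$ where $\mathcal{C}$ is a set, $\le$ a relation on $\mathcal{C}$, $s,t:\mathcal{C}\to\mathcal{C}$ maps (write $\bar a = s(a)$, $\hat a = t(a)$), and $\cdot$ a partially defined binary operation (write $ab$), such that: (1) $\le$ is a partial order; (2) $ab$ is defined iff $s(a)\le t(b)$; (3) if $(ab)c$ or $a(bc)$ is defined then $(ab)c=a(bc)$; (4) if $ab$ is defined then $s(ab)=s(b)$ and $t(ab)=t(a)$; (5) for every $a$ there is $b$ with $s(b)=t(b)=a$ such that $bc=c$ whenever $bc$ is defined and $cb=c$ whenever $cb$ is defined; this $b$ is unique, denoted $1_a$; (6) if $s(a)=t(a)=a$ then $ba=b$ whenever $ba$ is defined and $ab=b$ whenever $ab$ is defined; (7) if $a\le b$ then $s(a)\le s(b)$, $t(a)\le t(b)$ and $1_a\le 1_b$; and if $a\le b$, $c\le d$ and $ac,bd$ are defined then $ac\le bd$. A functor $F:\mathcal{C}\to\mathcal{D}$ is a map with $a\le b\Rightarrow F(a)\le F(b)$, $F(\bar a)=\overline{F(a)}$, $F(\hat a)=\widehat{F(a)}$, $F(ab)=F(a)F(b)$ whenever $ab$ is defined, and $F(1_a)=1_{F(a)}$. An element $a$ is invertible if there is $b$ with $ab=1_{\hat a}$, $ba=1_{\bar a}$. Write $a\sim b$ if there exist invertible $\theta_1,\theta_2$ with $\theta_1 a=b\theta_2$; $\tilde a$ denotes the $\sim$-class of $a$. The category of invertibles $\tilde{\mathcal{C}}$ is the set of $\sim$-classes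 with source $\tilde a\mapsto\widetilde{1_{\bar a}}$, target $\tilde a\mapsto\widetilde{1_{\hat a}}$, trivial order, and product $\tilde a\cdot\tilde b=\{\theta_1 a\theta_2 b\theta_3:\theta_i\text{ invertible},\ \theta_1a\theta_2b\theta_3\text{ defined}\}$; a functor $F$ induces $\tilde F(\tilde a):=\widetilde{F(a)}$. For functors $F,G:\mathcal{C}\to\mathcal{C}'$, $F\cong G$ means there exist maps $\theta_1,\theta_2:\mathcal{C}\to\mathcal{C}'$ with $\theta_1(a),\theta_2(a)$ invertible for all $a$ and $\theta_1(a)F(a)=G(a)\theta_2(a)$ (both sides defined) for all $a\in\mathcal{C}$. *)

theory Defs
  imports Main
begin

text \<open>A generalized category on a carrier set. The product is a total HOL function
  whose value is only meaningful where it is defined, i.e. where src a <= tgt b.\<close>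

record 'a gcat =
  carrier :: "'a set"
  le :: "'a \<Rightarrow> 'a \<Rightarrow> bool"
  src :: "'a \<Rightarrow> 'a"
  tgt :: "'a \<Rightarrow> 'a"
  mult :: "'a \<Rightarrow> 'a \<Rightarrow> 'a"

definition defd :: "'a gcat \<Rightarrow> 'a \<Rightarrow> 'a \<Rightarrow> bool" where
  "defd C a b \<longleftrightarrow> le C (src C a) (tgt C b)"

definition is_unit_of :: "'a gcat \<Rightarrow> 'a \<Rightarrow> 'a \<Rightarrow> bool" where
  "is_unit_of C a b \<longleftrightarrow> b \<in> carrier C \<and> src C b = a \<and> tgt C b = a \<and>
     (\<forall>c\<in>carrier C. defd C b c \<longrightarrow> mult C b c = c) \<and>
     (\<forall>c\<in>carrier C. defd C c b \<longrightarrow> mult C c b = c)"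

definition unit :: "'a gcat \<Rightarrow> 'a \<Rightarrow> 'a" where
  "unit C a = (THE b. is_unit_of C a b)"

definition gencat :: "'a gcat \<Rightarrow> bool" where
  "gencat C \<longleftrightarrow>
     (\<forall>a\<in>carrier C. src C a \<in> carrier C \<and> tgt C a \<in> carrier C) \<and>
     (\<forall>a\<in>carrier C. \<forall>b\<in>carrier C. defd C a b \<longrightarrow> mult C a b \<in> carrier C) \<and>
     \<comment> \<open>(1) partial order\<close>
     (\<forall>a\<in>carrier C. le C a a) \<and>
     (\<forall>a\<in>carrier C. \<forall>b\<in>carrier C. le C a b \<and> le C b a \<longrightarrow> a = b) \<and>
     (\<forall>a\<in>carrier C. \<forall>b\<in>carrier C. \<forall>c\<in>carrier C. le C a b \<and> le C b c \<longrightarrow> le C a c) \<and>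
     \<comment> \<open>(3) associativity\<close>
     (\<forall>a\<in>carrier C. \<forall>b\<in>carrier C. \<forall>c\<in>carrier C.
        ((defd C a b \<and> defd C (mult C a b) c) \<or> (defd C b c \<and> defd C a (mult C b c)))
        \<longrightarrow> (defd C a b \<and> defd C (mult C a b) c \<and> defd C b c \<and> defd C a (mult C b c) \<and>
             mult C (mult C a b) c = mult C a (mult C b c))) \<and>
     \<comment> \<open>(4)\<close>
     (\<forall>a\<in>carrier C. \<forall>b\<in>carrier C. defd C a b \<longrightarrow>
        src C (mult C a b) = src C b \<and> tgt C (mult C a b) = tgt C a) \<and>
     \<comment> \<open>(5) existence of units (uniqueness follows)\<close>
     (\<forall>a\<in>carrier C. \<exists>b. is_unit_of C a b) \<and>
     \<comment> \<open>(6)\<close>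
     (\<forall>a\<in>carrier C. src C a = a \<and> tgt C a = a \<longrightarrow>
        (\<forall>b\<in>carrier C. (defd C b a \<longrightarrow> mult C b a = b) \<and> (defd C a b \<longrightarrow> mult C a b = b))) \<and>
     \<comment> \<open>(7)\<close>
     (\<forall>a\<in>carrier C. \<forall>b\<in>carrier C. le C a b \<longrightarrow>
        le C (src C a) (src C b) \<and> le C (tgt C a) (tgt C b) \<and> le C (unit C a) (unit C b)) \<and>
     (\<forall>a\<in>carrier C. \<forall>b\<in>carrier C. \<forall>c\<in>carrier C. \<forall>d\<in>carrier C.
        le C a b \<and> le C c d \<and> defd C a c \<and> defd C b d \<longrightarrow> le C (mult C a c) (mult C b d))"

text \<open>In the associativity clause, "(ab)c or a(bc) defined" is read as: the
  iterated product is defined; then both are defined and equal.\<close>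

definition gfunctor :: "'a gcat \<Rightarrow> 'b gcat \<Rightarrow> ('a \<Rightarrow> 'b) \<Rightarrow> bool" where
  "gfunctor C D F \<longleftrightarrow>
     (\<forall>a\<in>carrier C. F a \<in> carrier D) \<and>
     (\<forall>a\<in>carrier C. \<forall>b\<in>carrier C. le C a b \<longrightarrow> le D (F a) (F b)) \<and>
     (\<forall>a\<in>carrier C. F (src C a) = src D (F a) \<and> F (tgt C a) = tgt D (F a)) \<and>
     (\<forall>a\<in>carrier C. \<forall>b\<in>carrier C. defd C a b \<longrightarrow> F (mult C a b) = mult D (F a) (F b)) \<and>
     (\<forall>a\<in>carrier C. F (unit C a) = unit D (F a))"

definition invertible :: "'a gcat \<Rightarrow> 'a \<Rightarrow> bool" where
  "invertible C a \<longleftrightarrow> a \<in> carrier C \<and> (\<exists>b\<in>carrier C.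
      defd C a b \<and> mult C a b = unit C (tgt C a) \<and>
      defd C b a \<and> mult C b a = unit C (src C a))"

definition sim :: "'a gcat \<Rightarrow> 'a \<Rightarrow> 'a \<Rightarrow> bool" where
  "sim C a b \<longleftrightarrow> a \<in> carrier C \<and> b \<in> carrier C \<and>
     (\<exists>t1 t2. invertible C t1 \<and> invertible C t2 \<and> defd C t1 a \<and> defd C b t2 \<and>
        mult C t1 a = mult C b t2)"

definition cls :: "'a gcat \<Rightarrow> 'a \<Rightarrow> 'a set" where
  "cls C a = {b \<in> carrier C. sim C a b}"

definition classes :: "'a gcat \<Rightarrow> 'a set set" where
  "classes C = cls C ` carrier C"

text \<open>Structure of the category of invertibles (the order is trivial).\<close>

definition tsrc :: "'a gcat \<Rightarrow> 'a set \<Rightarrow> 'a set" where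
  "tsrc C X = cls C (unit C (src C (SOME a. a \<in> X)))"

definition ttgt :: "'a gcat \<Rightarrow> 'a set \<Rightarrow> 'a set" where
  "ttgt C X = cls C (unit C (tgt C (SOME a. a \<in> X)))"

definition tprod :: "'a gcat \<Rightarrow> 'a set \<Rightarrow> 'a set \<Rightarrow> 'a set" where
  "tprod C X Y = {mult C (mult C (mult C (mult C t1 a) t2) b) t3 | t1 a t2 b t3.
      a \<in> X \<and> b \<in> Y \<and> invertible C t1 \<and> invertible C t2 \<and> invertible C t3 \<and>
      defd C t1 a \<and> defd C (mult C t1 a) t2 \<and> defd C (mult C (mult C t1 a) t2) b \<and>
      defd C (mult C (mult C (mult C t1 a) t2) b) t3}"

definition tprod_cls :: "'a gcat \<Rightarrow> 'a set \<Rightarrow> 'a set \<Rightarrow> 'a set set" where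
  "tprod_cls C X Y = cls C ` tprod C X Y"

definition tmap :: "'a gcat \<Rightarrow> 'b gcat \<Rightarrow> ('a \<Rightarrow> 'b) \<Rightarrow> 'a set \<Rightarrow> 'b set" where
  "tmap C D F X = cls D (F (SOME a. a \<in> X))"

definition tilde_iso :: "'a gcat \<Rightarrow> 'b gcat \<Rightarrow> bool" where
  "tilde_iso C D \<longleftrightarrow> (\<exists>\<Phi>. bij_betw \<Phi> (classes C) (classes D) \<and>
     (\<forall>X\<in>classes C. \<Phi> (tsrc C X) = tsrc D (\<Phi> X) \<and> \<Phi> (ttgt C X) = ttgt D (\<Phi> X)) \<and>
     (\<forall>X\<in>classes C. \<forall>Y\<in>classes C. \<Phi> ` tprod_cls C X Y = tprod_cls D (\<Phi> X) (\<Phi> Y)))"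

definition nat_iso :: "'a gcat \<Rightarrow> 'b gcat \<Rightarrow> ('a \<Rightarrow> 'b) \<Rightarrow> ('a \<Rightarrow> 'b) \<Rightarrow> bool" where
  "nat_iso C D F G \<longleftrightarrow> (\<exists>t1 t2. \<forall>a\<in>carrier C.
     invertible D (t1 a) \<and> invertible D (t2 a) \<and>
     defd D (t1 a) (F a) \<and> defd D (G a) (t2 a) \<and>
     mult D (t1 a) (F a) = mult D (G a) (t2 a))"

end

theory Submission
  imports Defs
begin

context
  fixes C :: "'a gcat" assumes gc: "gencat C"
begin

lemma G1: "(\<forall>a\<in>carrier C. src C a \<in> carrier C \<and> tgt C a \<in> carrier C)"
  using gc unfolding gencat_def by (elim conjE) assumption
lemma G2: "(\<forall>a\<in>carrier C. \<forall>b\<in>carrier C. defd C a b \<longrightarrow> mult C a b \<in> carrier C)"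
  using gc unfolding gencat_def by (elim conjE) assumption
lemma G3: "(\<forall>a\<in>carrier C. le C a a)"
  using gc unfolding gencat_def by (elim conjE) assumption
lemma G4: "(\<forall>a\<in>carrier C. \<forall>b\<in>carrier C. \<forall>c\<in>carrier C.
        ((defd C a b \<and> defd C (mult C a b) c) \<or> (defd C b c \<and> defd C a (mult C b c)))
        \<longrightarrow> (defd C a b \<and> defd C (mult C a b) c \<and> defd C b c \<and> defd C a (mult C b c) \<and>
             mult C (mult C a b) c = mult C a (mult C b c)))"
  using gc unfolding gencat_def by (elim conjE) assumption
lemma G5: "(\<forall>a\<in>carrier C. \<forall>b\<in>carrier C. defd C a b \<longrightarrow>
        src C (mult C a b) = src C b \<and> tgt C (mult C a b) = tgt C a)"
  using gc unfolding gencat_def by (elim conjE) assumption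
lemma G6: "(\<forall>a\<in>carrier C. \<exists>b. is_unit_of C a b)"
  using gc unfolding gencat_def by (elim conjE) assumption
lemmas G = G1 G2 G3 G4 G5 G6

lemma src_in[simp]: "a \<in> carrier C \<Longrightarrow> src C a \<in> carrier C" using G(1) by blast
lemma tgt_in[simp]: "a \<in> carrier C \<Longrightarrow> tgt C a \<in> carrier C" using G(1) by blast
lemma le_refl: "a \<in> carrier C \<Longrightarrow> le C a a" using G(3) by blast
lemma mult_in0: "a \<in> carrier C \<Longrightarrow> b \<in> carrier C \<Longrightarrow> defd C a b \<Longrightarrow> mult C a b \<in> carrier C"
  using G(2) by blast
lemma srctgt_mult0: "a \<in> carrier C \<Longrightarrow> b \<in> carrier C \<Longrightarrow> defd C a b \<Longrightarrow>
   src C (mult C a b) = src C b \<and> tgt C (mult C a b) = tgt C a"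
  using G(5) by blast
lemma assoc0: "a \<in> carrier C \<Longrightarrow> b \<in> carrier C \<Longrightarrow> c \<in> carrier C \<Longrightarrow> defd C a b \<Longrightarrow>
   defd C (mult C a b) c \<Longrightarrow> mult C (mult C a b) c = mult C a (mult C b c)"
proof -
  assume h: "a \<in> carrier C" "b \<in> carrier C" "c \<in> carrier C" "defd C a b" "defd C (mult C a b) c"
  from G(4) h(1-3) have "((defd C a b \<and> defd C (mult C a b) c) \<or> (defd C b c \<and> defd C a (mult C b c)))
        \<longrightarrow> (defd C a b \<and> defd C (mult C a b) c \<and> defd C b c \<and> defd C a (mult C b c) \<and>
             mult C (mult C a b) c = mult C a (mult C b c))" by blast
  with h(4,5) show ?thesis by blast
qed
lemma unit_ex: "a \<in> carrier C \<Longrightarrow> \<exists>b. is_unit_of C a b" using G(6) by blast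

lemma unit_uniq: "x \<in> carrier C \<Longrightarrow> is_unit_of C x b \<Longrightarrow> is_unit_of C x b' \<Longrightarrow> b = b'"
proof -
  assume x: "x \<in> carrier C" and b: "is_unit_of C x b" and b': "is_unit_of C x b'"
  have d: "defd C b b'" using b b' le_refl[OF x] unfolding is_unit_of_def defd_def by simp
  have "mult C b b' = b'" using b b' d unfolding is_unit_of_def by blast
  moreover have "mult C b b' = b" using b b' d unfolding is_unit_of_def by blast
  ultimately show ?thesis by simp
qed

lemma unit_of: "x \<in> carrier C \<Longrightarrow> is_unit_of C x (unit C x)"
  unfolding unit_def by (metis theI unit_ex unit_uniq)

lemma unit_in[simp]: "x \<in> carrier C \<Longrightarrow> unit C x \<in> carrier C"
  using unit_of is_unit_of_def by metis
lemma unit_src[simp]: "x \<in> carrier C \<Longrightarrow> src C (unit C x) = x"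
  using unit_of is_unit_of_def by metis
lemma unit_tgt[simp]: "x \<in> carrier C \<Longrightarrow> tgt C (unit C x) = x"
  using unit_of is_unit_of_def by metis

lemma defd_eq[simp]: "a \<in> carrier C \<Longrightarrow> b \<in> carrier C \<Longrightarrow> defd C a b \<longleftrightarrow> src C a = tgt C b"
proof
  assume a: "a \<in> carrier C" and b: "b \<in> carrier C" and d: "defd C a b"
  define x where "x = src C a"
  have x: "x \<in> carrier C" using a x_def by simp
  have d2: "defd C (unit C x) b" using d x unfolding defd_def x_def by simp
  have "mult C (unit C x) b = b" using unit_of[OF x] b d2 unfolding is_unit_of_def by auto
  then have "tgt C b = tgt C (unit C x)" using srctgt_mult0[OF unit_in[OF x] b d2] by simp
  then show "src C a = tgt C b" using x x_def by simp
next
  assume a: "a \<in> carrier C" and b: "b \<in> carrier C" and "src C a = tgt C b"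
  then show "defd C a b" unfolding defd_def using le_refl by simp
qed

lemma mult_in[simp]: "a \<in> carrier C \<Longrightarrow> b \<in> carrier C \<Longrightarrow> src C a = tgt C b \<Longrightarrow> mult C a b \<in> carrier C"
  using mult_in0 by simp
lemma src_mult[simp]: "a \<in> carrier C \<Longrightarrow> b \<in> carrier C \<Longrightarrow> src C a = tgt C b \<Longrightarrow> src C (mult C a b) = src C b"
  using srctgt_mult0 by simp
lemma tgt_mult[simp]: "a \<in> carrier C \<Longrightarrow> b \<in> carrier C \<Longrightarrow> src C a = tgt C b \<Longrightarrow> tgt C (mult C a b) = tgt C a"
  using srctgt_mult0 by simp
lemma assoc: "a \<in> carrier C \<Longrightarrow> b \<in> carrier C \<Longrightarrow> c \<in> carrier C \<Longrightarrow> src C a = tgt C b \<Longrightarrow>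
   src C b = tgt C c \<Longrightarrow> mult C (mult C a b) c = mult C a (mult C b c)"
  using assoc0 by simp
lemma unit_left[simp]: "x \<in> carrier C \<Longrightarrow> c \<in> carrier C \<Longrightarrow> tgt C c = x \<Longrightarrow> mult C (unit C x) c = c"
proof -
  assume h: "x \<in> carrier C" "c \<in> carrier C" "tgt C c = x"
  then have "defd C (unit C x) c" by simp
  then show ?thesis using unit_of[OF h(1)] h(2) unfolding is_unit_of_def by blast
qed
lemma unit_right[simp]: "x \<in> carrier C \<Longrightarrow> c \<in> carrier C \<Longrightarrow> src C c = x \<Longrightarrow> mult C c (unit C x) = c"
proof -
  assume h: "x \<in> carrier C" "c \<in> carrier C" "src C c = x"
  then have "defd C c (unit C x)" by simp
  then show ?thesis using unit_of[OF h(1)] h(2) unfolding is_unit_of_def by blast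
qed

lemma cancel: "a \<in> carrier C \<Longrightarrow> b \<in> carrier C \<Longrightarrow> x \<in> carrier C \<Longrightarrow> src C a = tgt C b \<Longrightarrow>
   src C b = tgt C x \<Longrightarrow> mult C a b = unit C (tgt C a) \<Longrightarrow> mult C a (mult C b x) = x"
proof -
  assume h: "a \<in> carrier C" "b \<in> carrier C" "x \<in> carrier C" "src C a = tgt C b"
    "src C b = tgt C x" "mult C a b = unit C (tgt C a)"
  have "src C b = tgt C a" by (metis h(1) h(6) src_mult[OF h(1,2,4)] tgt_in unit_src)
  have "mult C a (mult C b x) = mult C (mult C a b) x" by (rule assoc[symmetric]) (use h in simp_all)
  also have "\<dots> = mult C (unit C (tgt C a)) x" using h(6) by simp
  also have "\<dots> = x"
  proof -
    have "tgt C x = tgt C a" using h(5) \<open>src C b = tgt C a\<close> by simp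
    then show ?thesis using h unit_left[of "tgt C a" x] by simp
  qed
  finally show ?thesis .
qed

lemma invE:
  assumes "invertible C t"
  obtains s where "t \<in> carrier C" "s \<in> carrier C" "src C t = tgt C s" "src C s = tgt C t"
    "mult C t s = unit C (tgt C t)" "mult C s t = unit C (src C t)"
  using assms unfolding invertible_def by (metis defd_eq)

lemma invI:
  "t \<in> carrier C \<Longrightarrow> s \<in> carrier C \<Longrightarrow> src C t = tgt C s \<Longrightarrow> src C s = tgt C t \<Longrightarrow>
    mult C t s = unit C (tgt C t) \<Longrightarrow> mult C s t = unit C (src C t) \<Longrightarrow> invertible C t"
  unfolding invertible_def by auto

lemma inv_in: "invertible C t \<Longrightarrow> t \<in> carrier C" unfolding invertible_def by auto

lemma inv_unit: "x \<in> carrier C \<Longrightarrow> invertible C (unit C x)"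
  by (rule invI[of _ "unit C x"]) auto

lemma inv_comp:
  assumes u: "invertible C u" and t: "invertible C t" and e: "src C u = tgt C t"
  shows "invertible C (mult C u t)"
proof -
  obtain u' where u': "u \<in> carrier C" "u' \<in> carrier C" "src C u = tgt C u'" "src C u' = tgt C u"
    "mult C u u' = unit C (tgt C u)" "mult C u' u = unit C (src C u)" using invE[OF u] by blast
  obtain t' where t': "t \<in> carrier C" "t' \<in> carrier C" "src C t = tgt C t'" "src C t' = tgt C t"
    "mult C t t' = unit C (tgt C t)" "mult C t' t = unit C (src C t)" using invE[OF t] by blast
  have tu': "tgt C u' = src C u"
    by (metis u' tgt_mult unit_tgt src_in)
  have tt': "tgt C t' = src C t"
    by (metis t' tgt_mult unit_tgt src_in)
  have 1: "mult C (mult C u t) (mult C t' u') = unit C (tgt C u)"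
  proof -
    have "mult C (mult C u t) (mult C t' u') = mult C u (mult C t (mult C t' u'))"
      using assoc u' t' e tu' tt' by simp
    also have "\<dots> = mult C u u'" using cancel u' t' e tu' tt' by simp
    finally show ?thesis using u' by simp
  qed
  have 2: "mult C (mult C t' u') (mult C u t) = unit C (src C t)"
  proof -
    have "mult C (mult C t' u') (mult C u t) = mult C t' (mult C u' (mult C u t))"
      using assoc u' t' e tu' tt' by simp
    also have "\<dots> = mult C t' t" using cancel u' t' e tu' tt' by simp
    finally show ?thesis using t' by simp
  qed
  show ?thesis
    apply (rule invI[of _ "mult C t' u'"])
    using u' t' e tu' tt' 1 2 by simp_all
qed

lemma sim_I: "invertible C t1 \<Longrightarrow> invertible C t2 \<Longrightarrow> a \<in> carrier C \<Longrightarrow> b \<in> carrier C \<Longrightarrow>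
  src C t1 = tgt C a \<Longrightarrow> src C b = tgt C t2 \<Longrightarrow> mult C t1 a = mult C b t2 \<Longrightarrow> sim C a b"
  apply (simp add: sim_def)
  apply (rule exI[of _ t1], rule conjI, assumption, rule exI[of _ t2])
  using inv_in by simp

lemma sim_E:
  assumes "sim C a b"
  obtains t1 t2 where "invertible C t1" "invertible C t2" "a \<in> carrier C" "b \<in> carrier C"
    "src C t1 = tgt C a" "src C b = tgt C t2" "mult C t1 a = mult C b t2"
  using assms unfolding sim_def using inv_in by auto

lemma sim_refl: "a \<in> carrier C \<Longrightarrow> sim C a a"
  by (rule sim_I[of "unit C (tgt C a)" "unit C (src C a)"]) (auto simp: inv_unit)

lemma sim_facts:
  assumes "invertible C t1" "invertible C t2" "a \<in> carrier C" "b \<in> carrier C"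
    "src C t1 = tgt C a" "src C b = tgt C t2" "mult C t1 a = mult C b t2"
  shows "src C a = src C t2" "tgt C t1 = tgt C b"
  using assms inv_in by (metis src_mult tgt_mult)+

lemma sim_sym: assumes "sim C a b" shows "sim C b a"
proof -
  obtain t1 t2 where h: "invertible C t1" "invertible C t2" "a \<in> carrier C" "b \<in> carrier C"
    "src C t1 = tgt C a" "src C b = tgt C t2" "mult C t1 a = mult C b t2"
    using sim_E[OF assms] by blast
  note f = sim_facts[OF h]
  obtain s1 where s1: "t1 \<in> carrier C" "s1 \<in> carrier C" "src C t1 = tgt C s1" "src C s1 = tgt C t1"
    "mult C t1 s1 = unit C (tgt C t1)" "mult C s1 t1 = unit C (src C t1)" using invE[OF h(1)] by blast
  obtain s2 where s2: "t2 \<in> carrier C" "s2 \<in> carrier C" "src C t2 = tgt C s2" "src C s2 = tgt C t2"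
    "mult C t2 s2 = unit C (tgt C t2)" "mult C s2 t2 = unit C (src C t2)" using invE[OF h(2)] by blast
  have ts1: "tgt C s1 = src C t1" by (metis s1 tgt_mult unit_tgt src_in)
  have ts2: "tgt C s2 = src C t2" by (metis s2 tgt_mult unit_tgt src_in)
  have i1: "invertible C s1" by (rule invI[of _ t1]) (use s1 ts1 in simp_all)
  have i2: "invertible C s2" by (rule invI[of _ t2]) (use s2 ts2 in simp_all)
  have e1: "src C a = tgt C s2" using f(1) s2(3) by simp
  have as2: "mult C a s2 \<in> carrier C" using h(3) s2(2) e1 by simp
  have tas2: "tgt C (mult C a s2) = tgt C a" using h(3) s2(2) e1 by simp
  have c1: "mult C s1 t1 = unit C (tgt C s1)" using s1(6) ts1 by simp
  have ta: "tgt C t1 = tgt C b" using f(2) .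
  have "mult C a s2 = mult C s1 (mult C t1 (mult C a s2))"
    by (rule cancel[OF s1(2) s1(1) as2 s1(4) _ c1, symmetric]) (simp add: tas2 h(5))
  also have "mult C t1 (mult C a s2) = mult C (mult C t1 a) s2"
    by (rule assoc[symmetric, OF s1(1) h(3) s2(2) h(5) e1])
  also have "\<dots> = mult C (mult C b t2) s2" using h(7) by simp
  also have "\<dots> = mult C b (mult C t2 s2)"
    by (rule assoc[OF h(4) s2(1) s2(2) h(6) s2(3)])
  also have "\<dots> = b" using s2(5) h(4) h(6) s2(1) by simp
  finally have eq: "mult C s1 b = mult C a s2" ..
  have sb: "src C s1 = tgt C b" using s1(4) ta by simp
  show ?thesis
    by (rule sim_I[OF i1 i2 h(4) h(3) sb e1 eq])
qed

lemma sim_trans: assumes "sim C a b" "sim C b c" shows "sim C a c"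
proof -
  obtain t1 t2 where h: "invertible C t1" "invertible C t2" "a \<in> carrier C" "b \<in> carrier C"
    "src C t1 = tgt C a" "src C b = tgt C t2" "mult C t1 a = mult C b t2"
    using sim_E[OF assms(1)] by blast
  note f = sim_facts[OF h]
  obtain u1 u2 where g: "invertible C u1" "invertible C u2" "b \<in> carrier C" "c \<in> carrier C"
    "src C u1 = tgt C b" "src C c = tgt C u2" "mult C u1 b = mult C c u2"
    using sim_E[OF assms(2)] by blast
  note f2 = sim_facts[OF g]
  note cs = inv_in[OF h(1)] inv_in[OF h(2)] inv_in[OF g(1)] inv_in[OF g(2)]
  have "mult C (mult C u1 t1) a = mult C u1 (mult C t1 a)" by (rule assoc) (use cs h g f f2 in simp_all)
  also have "\<dots> = mult C u1 (mult C b t2)" using h by simp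
  also have "\<dots> = mult C (mult C u1 b) t2" by (rule assoc[symmetric]) (use cs h g f f2 in simp_all)
  also have "\<dots> = mult C (mult C c u2) t2" using g by simp
  also have "\<dots> = mult C c (mult C u2 t2)" by (rule assoc) (use cs h g f f2 in simp_all)
  finally have eq: "mult C (mult C u1 t1) a = mult C c (mult C u2 t2)" .
  show ?thesis
    by (rule sim_I[OF inv_comp[OF g(1) h(1)] inv_comp[OF g(2) h(2)] _ _ _ _ eq]) (use cs h g f f2 in simp_all)
qed

lemma cls_eq: "sim C a b \<Longrightarrow> cls C a = cls C b"
  unfolding cls_def using sim_sym sim_trans by blast

lemma in_cls: "a \<in> carrier C \<Longrightarrow> a \<in> cls C a"
  unfolding cls_def using sim_refl by auto

lemma some_cls: "a \<in> carrier C \<Longrightarrow> sim C a (SOME x. x \<in> cls C a)"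
  by (metis (no_types, lifting) cls_def in_cls mem_Collect_eq someI_ex)

lemma cls_eq_iff: "a \<in> carrier C \<Longrightarrow> b \<in> carrier C \<Longrightarrow> cls C a = cls C b \<longleftrightarrow> sim C a b"
  using cls_eq in_cls unfolding cls_def by blast

lemma unit_sim_srctgt: "invertible C t \<Longrightarrow> sim C (unit C (src C t)) (unit C (tgt C t))"
  by (rule sim_I[of t t]) (use inv_in in simp_all)

lemma sim_src: assumes "sim C a b" shows "sim C (unit C (src C a)) (unit C (src C b))"
proof -
  obtain t1 t2 where h: "invertible C t1" "invertible C t2" "a \<in> carrier C" "b \<in> carrier C"
    "src C t1 = tgt C a" "src C b = tgt C t2" "mult C t1 a = mult C b t2"
    using sim_E[OF assms(1)] by blast
  show ?thesis using unit_sim_srctgt[OF h(2)] sim_facts[OF h] h by simp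
qed

lemma sim_tgt: assumes "sim C a b" shows "sim C (unit C (tgt C a)) (unit C (tgt C b))"
proof -
  obtain t1 t2 where h: "invertible C t1" "invertible C t2" "a \<in> carrier C" "b \<in> carrier C"
    "src C t1 = tgt C a" "src C b = tgt C t2" "mult C t1 a = mult C b t2"
    using sim_E[OF assms(1)] by blast
  show ?thesis using unit_sim_srctgt[OF h(1)] sim_facts[OF h] h by simp
qed

lemma tsrc_cls: "a \<in> carrier C \<Longrightarrow> tsrc C (cls C a) = cls C (unit C (src C a))"
  unfolding tsrc_def using cls_eq sim_src sim_sym some_cls by metis

lemma ttgt_cls: "a \<in> carrier C \<Longrightarrow> ttgt C (cls C a) = cls C (unit C (tgt C a))"
  unfolding ttgt_def using cls_eq sim_tgt sim_sym some_cls by metis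

end

lemma classes_E: "X \<in> classes C \<Longrightarrow> (\<And>x. x \<in> carrier C \<Longrightarrow> X = cls C x \<Longrightarrow> P) \<Longrightarrow> P"
  unfolding classes_def by blast

lemma cls_sub: "cls C x \<subseteq> carrier C" unfolding cls_def by auto

lemma cls_in_classes: "x \<in> carrier C \<Longrightarrow> cls C x \<in> classes C" unfolding classes_def by blast

lemma tprod_sub: "gencat C \<Longrightarrow> X \<subseteq> carrier C \<Longrightarrow> Y \<subseteq> carrier C \<Longrightarrow> tprod C X Y \<subseteq> carrier C"
proof
  fix w assume gc: "gencat C" and h: "X \<subseteq> carrier C" "Y \<subseteq> carrier C" "w \<in> tprod C X Y"
  obtain t1 a t2 b t3 where w: "w = mult C (mult C (mult C (mult C t1 a) t2) b) t3"
    "a \<in> X" "b \<in> Y" "invertible C t1" "invertible C t2" "invertible C t3"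
    "defd C t1 a" "defd C (mult C t1 a) t2" "defd C (mult C (mult C t1 a) t2) b"
    "defd C (mult C (mult C (mult C t1 a) t2) b) t3"
    using h(3) unfolding tprod_def by blast
  have c: "t1 \<in> carrier C" "a \<in> carrier C" "t2 \<in> carrier C" "b \<in> carrier C" "t3 \<in> carrier C"
    using w h inv_in[OF gc] by auto
  have c1: "mult C t1 a \<in> carrier C" using mult_in0[OF gc] c w by blast
  have c2: "mult C (mult C t1 a) t2 \<in> carrier C" using mult_in0[OF gc] c c1 w by blast
  have c3: "mult C (mult C (mult C t1 a) t2) b \<in> carrier C" using mult_in0[OF gc] c c2 w by blast
  show "w \<in> carrier C" using mult_in0[OF gc] c c3 w by blast
qed

context
  fixes C :: "'a gcat" and D :: "'b gcat" and F :: "'a \<Rightarrow> 'b"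
  assumes gcC: "gencat C" and gcD: "gencat D" and gf: "gfunctor C D F"
begin

lemma F_in[simp]: "a \<in> carrier C \<Longrightarrow> F a \<in> carrier D" using gf unfolding gfunctor_def by blast
lemma F_src[simp]: "a \<in> carrier C \<Longrightarrow> src D (F a) = F (src C a)" using gf unfolding gfunctor_def by metis
lemma F_tgt[simp]: "a \<in> carrier C \<Longrightarrow> tgt D (F a) = F (tgt C a)" using gf unfolding gfunctor_def by metis
lemma F_unit[simp]: "a \<in> carrier C \<Longrightarrow> unit D (F a) = F (unit C a)" using gf unfolding gfunctor_def by metis
lemma F_mult: "a \<in> carrier C \<Longrightarrow> b \<in> carrier C \<Longrightarrow> src C a = tgt C b \<Longrightarrow> mult D (F a) (F b) = F (mult C a b)"
proof -
  assume h: "a \<in> carrier C" "b \<in> carrier C" "src C a = tgt C b"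
  then have "defd C a b" using defd_eq[OF gcC] by simp
  then show ?thesis using gf h(1,2) unfolding gfunctor_def by metis
qed

lemma F_inv: assumes "invertible C t" shows "invertible D (F t)"
proof -
  obtain s where s: "t \<in> carrier C" "s \<in> carrier C" "src C t = tgt C s" "src C s = tgt C t"
    "mult C t s = unit C (tgt C t)" "mult C s t = unit C (src C t)" using invE[OF gcC assms] by blast
  show ?thesis
    by (rule invI[OF gcD, of _ "F s"]) (use s F_mult[of t s] F_mult[of s t] gcC in simp_all)
qed

lemma F_sim: assumes "sim C a b" shows "sim D (F a) (F b)"
proof -
  obtain t1 t2 where h: "invertible C t1" "invertible C t2" "a \<in> carrier C" "b \<in> carrier C"
    "src C t1 = tgt C a" "src C b = tgt C t2" "mult C t1 a = mult C b t2"
    using sim_E[OF gcC assms] by blast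
  have c: "t1 \<in> carrier C" "t2 \<in> carrier C" using h inv_in[OF gcC] by auto
  show ?thesis
    by (rule sim_I[OF gcD F_inv[OF h(1)] F_inv[OF h(2)]])
       (use h c F_mult[of t1 a] F_mult[of b t2] in simp_all)
qed

lemma F_tmap: "a \<in> carrier C \<Longrightarrow> tmap C D F (cls C a) = cls D (F a)"
  unfolding tmap_def using some_cls[OF gcC] F_sim cls_eq[OF gcD] sim_sym[OF gcD] by metis

lemma F_cls: "F ` cls C a \<subseteq> cls D (F a)"
  unfolding cls_def using F_sim sim_E[OF gcC] by fastforce

lemma tprod_E:
  assumes "w \<in> tprod C X Y" "X \<subseteq> carrier C" "Y \<subseteq> carrier C"
  obtains t1 a t2 b t3 where "w = mult C (mult C (mult C (mult C t1 a) t2) b) t3"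
    "a \<in> X" "b \<in> Y" "invertible C t1" "invertible C t2" "invertible C t3"
    "t1 \<in> carrier C" "a \<in> carrier C" "t2 \<in> carrier C" "b \<in> carrier C" "t3 \<in> carrier C"
    "src C t1 = tgt C a" "src C (mult C t1 a) = tgt C t2"
    "src C (mult C (mult C t1 a) t2) = tgt C b"
    "src C (mult C (mult C (mult C t1 a) t2) b) = tgt C t3"
proof -
  obtain t1 a t2 b t3 where w: "w = mult C (mult C (mult C (mult C t1 a) t2) b) t3"
    "a \<in> X" "b \<in> Y" "invertible C t1" "invertible C t2" "invertible C t3"
    "defd C t1 a" "defd C (mult C t1 a) t2" "defd C (mult C (mult C t1 a) t2) b"
    "defd C (mult C (mult C (mult C t1 a) t2) b) t3"
    using assms(1) unfolding tprod_def by blast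
  have c: "t1 \<in> carrier C" "a \<in> carrier C" "t2 \<in> carrier C" "b \<in> carrier C" "t3 \<in> carrier C"
    using w assms inv_in[OF gcC] by auto
  have c1: "mult C t1 a \<in> carrier C" using mult_in0[OF gcC] c w by blast
  have c2: "mult C (mult C t1 a) t2 \<in> carrier C" using mult_in0[OF gcC] c c1 w by blast
  have c3: "mult C (mult C (mult C t1 a) t2) b \<in> carrier C" using mult_in0[OF gcC] c c2 w by blast
  have "src C t1 = tgt C a" using w(7) c defd_eq[OF gcC] by blast
  moreover have "src C (mult C t1 a) = tgt C t2" using w(8) c c1 defd_eq[OF gcC] by blast
  moreover have "src C (mult C (mult C t1 a) t2) = tgt C b" using w(9) c c2 defd_eq[OF gcC] by blast
  moreover have "src C (mult C (mult C (mult C t1 a) t2) b) = tgt C t3" using w(10) c c3 defd_eq[OF gcC] by blast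
  ultimately show ?thesis
    by (rule that[OF w(1-6) c])
qed

lemma F_tprod:
  assumes "w \<in> tprod C X Y" "X \<subseteq> carrier C" "Y \<subseteq> carrier C" "F ` X \<subseteq> X'" "F ` Y \<subseteq> Y'"
  shows "F w \<in> tprod D X' Y'"
proof -
  obtain t1 a t2 b t3 where w: "w = mult C (mult C (mult C (mult C t1 a) t2) b) t3"
    "a \<in> X" "b \<in> Y" "invertible C t1" "invertible C t2" "invertible C t3"
    "t1 \<in> carrier C" "a \<in> carrier C" "t2 \<in> carrier C" "b \<in> carrier C" "t3 \<in> carrier C"
    "src C t1 = tgt C a" "src C (mult C t1 a) = tgt C t2"
    "src C (mult C (mult C t1 a) t2) = tgt C b"
    "src C (mult C (mult C (mult C t1 a) t2) b) = tgt C t3"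
    using tprod_E[OF assms(1-3)] by blast
  define p1 where "p1 = mult C t1 a"
  define p2 where "p2 = mult C p1 t2"
  define p3 where "p3 = mult C p2 b"
  have c1: "p1 \<in> carrier C" unfolding p1_def using w mult_in[OF gcC] by simp
  have c2: "p2 \<in> carrier C" unfolding p2_def using w c1 mult_in[OF gcC] p1_def by simp
  have c3: "p3 \<in> carrier C" unfolding p3_def using w c2 mult_in[OF gcC] p2_def p1_def by simp
  have e1: "F p1 = mult D (F t1) (F a)" unfolding p1_def using F_mult w by simp
  have e2: "F p2 = mult D (F p1) (F t2)" unfolding p2_def using F_mult w c1 p1_def by simp
  have e3: "F p3 = mult D (F p2) (F b)" unfolding p3_def using F_mult w c2 p1_def p2_def by simp
  have e4: "F w = mult D (F p3) (F t3)" using F_mult w c3 p1_def p2_def p3_def by simp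
  have d1: "defd D (F t1) (F a)" using w defd_eq[OF gcD] by simp
  have d2: "defd D (F p1) (F t2)" using w c1 p1_def defd_eq[OF gcD] by simp
  have d3: "defd D (F p2) (F b)" using w c2 p1_def p2_def defd_eq[OF gcD] by simp
  have d4: "defd D (F p3) (F t3)" using w c3 p1_def p2_def p3_def defd_eq[OF gcD] by simp
  have m: "F a \<in> X'" "F b \<in> Y'" using w assms(4,5) by auto
  have i: "invertible D (F t1)" "invertible D (F t2)" "invertible D (F t3)" using F_inv w by auto
  show ?thesis unfolding tprod_def mem_Collect_eq
    apply (rule exI[where x="F t1"], rule exI[where x="F a"], rule exI[where x="F t2"],
      rule exI[where x="F b"], rule exI[where x="F t3"])
    using e1[symmetric] e2[symmetric] e3[symmetric] e4 d1 d2 d3 d4 m i by simp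
qed

end


lemma key1:
  assumes gcC: "gencat C" and gcD: "gencat D" and gf: "gfunctor C D F" and gg: "gfunctor D C G"
    and H: "\<forall>X\<in>classes C. tmap D C G (tmap C D F X) = X" and x: "x \<in> carrier C"
  shows "sim C (G (F x)) x"
proof -
  have Fx: "F x \<in> carrier D" using F_in[OF gcC gcD gf x] .
  have GFx: "G (F x) \<in> carrier C" using F_in[OF gcD gcC gg Fx] .
  have "tmap D C G (tmap C D F (cls C x)) = cls C x" using H cls_in_classes[OF x] by blast
  then have "cls C (G (F x)) = cls C x"
    using F_tmap[OF gcC gcD gf x] F_tmap[OF gcD gcC gg Fx] by simp
  then show ?thesis using cls_eq_iff[OF gcC GFx x] by simp
qed

lemma key2:
  assumes gcC: "gencat C" and gcD: "gencat D" and gf: "gfunctor C D F" and gg: "gfunctor D C G"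
    and H: "\<forall>x\<in>carrier C. sim C (G (F x)) x"
  shows "\<forall>X\<in>classes C. tmap D C G (tmap C D F X) = X"
proof
  fix X assume "X \<in> classes C"
  then obtain x where x: "x \<in> carrier C" "X = cls C x" by (rule classes_E)
  have Fx: "F x \<in> carrier D" using F_in[OF gcC gcD gf x(1)] .
  have "tmap D C G (tmap C D F X) = cls C (G (F x))"
    using F_tmap[OF gcC gcD gf x(1)] F_tmap[OF gcD gcC gg Fx] x by simp
  also have "\<dots> = X" using cls_eq[OF gcC] H x by simp
  finally show "tmap D C G (tmap C D F X) = X" .
qed

lemma natiso_iff:
  assumes gcC: "gencat C" and gcD: "gencat D" and gf: "gfunctor C D F" and gg: "gfunctor D C G"
  shows "nat_iso C C (G \<circ> F) id \<longleftrightarrow> (\<forall>x\<in>carrier C. sim C (G (F x)) x)"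
proof
  assume "nat_iso C C (G \<circ> F) id"
  then show "\<forall>x\<in>carrier C. sim C (G (F x)) x"
    unfolding nat_iso_def sim_def using F_in[OF gcC gcD gf] F_in[OF gcD gcC gg] by fastforce
next
  assume H: "\<forall>x\<in>carrier C. sim C (G (F x)) x"
  then have "\<forall>x\<in>carrier C. \<exists>p. invertible C (fst p) \<and> invertible C (snd p) \<and>
      defd C (fst p) (G (F x)) \<and> defd C x (snd p) \<and> mult C (fst p) (G (F x)) = mult C x (snd p)"
    unfolding sim_def by fastforce
  then obtain f where ff: "\<forall>x\<in>carrier C. invertible C (fst (f x)) \<and> invertible C (snd (f x)) \<and>
      defd C (fst (f x)) (G (F x)) \<and> defd C x (snd (f x)) \<and> mult C (fst (f x)) (G (F x)) = mult C x (snd (f x))"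
    by (rule bchoice[THEN exE])
  show "nat_iso C C (G \<circ> F) id" unfolding nat_iso_def
    by (rule exI[of _ "\<lambda>x. fst (f x)"], rule exI[of _ "\<lambda>x. snd (f x)"]) (simp add: ff)
qed

lemma tilde:
  assumes gcC: "gencat C" and gcD: "gencat D" and gf: "gfunctor C D F" and gg: "gfunctor D C G"
    and H1: "\<forall>X\<in>classes C. tmap D C G (tmap C D F X) = X"
    and H2: "\<forall>Y\<in>classes D. tmap C D F (tmap D C G Y) = Y"
  shows "tilde_iso C D"
  unfolding tilde_iso_def
proof (intro exI[of _ "tmap C D F"] conjI ballI)
  have simC: "\<And>x. x \<in> carrier C \<Longrightarrow> cls C (G (F x)) = cls C x"
    using key1[OF gcC gcD gf gg H1] cls_eq[OF gcC] by blast
  have simD: "\<And>y. y \<in> carrier D \<Longrightarrow> cls D (F (G y)) = cls D y"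
    using key1[OF gcD gcC gg gf H2] cls_eq[OF gcD] by blast
  show "bij_betw (tmap C D F) (classes C) (classes D)"
  proof (rule bij_betw_byWitness[where f'="tmap D C G"])
    show "\<forall>a\<in>classes C. tmap D C G (tmap C D F a) = a" using H1 .
    show "\<forall>a\<in>classes D. tmap C D F (tmap D C G a) = a" using H2 .
    show "tmap C D F ` classes C \<subseteq> classes D"
    proof
      fix Z assume "Z \<in> tmap C D F ` classes C"
      then obtain x where "x \<in> carrier C" "Z = tmap C D F (cls C x)" unfolding classes_def by blast
      then show "Z \<in> classes D" using F_tmap[OF gcC gcD gf] cls_in_classes F_in[OF gcC gcD gf] by metis
    qed
    show "tmap D C G ` classes D \<subseteq> classes C"
    proof
      fix Z assume "Z \<in> tmap D C G ` classes D"
      then obtain x where "x \<in> carrier D" "Z = tmap D C G (cls D x)" unfolding classes_def by blast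
      then show "Z \<in> classes C" using F_tmap[OF gcD gcC gg] cls_in_classes F_in[OF gcD gcC gg] by metis
    qed
  qed
next
  fix X assume "X \<in> classes C"
  then obtain x where x: "x \<in> carrier C" "X = cls C x" by (rule classes_E)
  have Fx: "F x \<in> carrier D" using F_in[OF gcC gcD gf x(1)] .
  show "tmap C D F (tsrc C X) = tsrc D (tmap C D F X)"
    using x Fx tsrc_cls[OF gcC] tsrc_cls[OF gcD] F_tmap[OF gcC gcD gf]
      F_src[OF gcC gcD gf] F_tgt[OF gcC gcD gf] F_unit[OF gcC gcD gf] unit_in[OF gcC] src_in[OF gcC] tgt_in[OF gcC]
    by simp
  show "tmap C D F (ttgt C X) = ttgt D (tmap C D F X)"
    using x Fx ttgt_cls[OF gcC] ttgt_cls[OF gcD] F_tmap[OF gcC gcD gf]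
      F_src[OF gcC gcD gf] F_tgt[OF gcC gcD gf] F_unit[OF gcC gcD gf] unit_in[OF gcC] src_in[OF gcC] tgt_in[OF gcC]
    by simp
next
  have simC: "\<And>x. x \<in> carrier C \<Longrightarrow> cls C (G (F x)) = cls C x"
    using key1[OF gcC gcD gf gg H1] cls_eq[OF gcC] by blast
  have simD: "\<And>y. y \<in> carrier D \<Longrightarrow> cls D (F (G y)) = cls D y"
    using key1[OF gcD gcC gg gf H2] cls_eq[OF gcD] by blast
  fix X Y assume "X \<in> classes C" "Y \<in> classes C"
  then obtain x y where x: "x \<in> carrier C" "X = cls C x" and y: "y \<in> carrier C" "Y = cls C y"
    by (meson classes_E)
  have Fx: "F x \<in> carrier D" using F_in[OF gcC gcD gf x(1)] .
  have Fy: "F y \<in> carrier D" using F_in[OF gcC gcD gf y(1)] .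
  have PX: "tmap C D F X = cls D (F x)" using F_tmap[OF gcC gcD gf x(1)] x by simp
  have PY: "tmap C D F Y = cls D (F y)" using F_tmap[OF gcC gcD gf y(1)] y by simp
  have subC: "tprod C X Y \<subseteq> carrier C" using tprod_sub[OF gcC] x y cls_sub by metis
  have subD: "tprod D (cls D (F x)) (cls D (F y)) \<subseteq> carrier D" using tprod_sub[OF gcD] cls_sub by metis
  show "tmap C D F ` tprod_cls C X Y = tprod_cls D (tmap C D F X) (tmap C D F Y)"
    unfolding tprod_cls_def PX PY
  proof
    show "tmap C D F ` cls C ` tprod C X Y \<subseteq> cls D ` tprod D (cls D (F x)) (cls D (F y))"
    proof
      fix Z assume "Z \<in> tmap C D F ` cls C ` tprod C X Y"
      then obtain w where w: "w \<in> tprod C X Y" "Z = tmap C D F (cls C w)" by blast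
      have wc: "w \<in> carrier C" using w subC by blast
      have "F w \<in> tprod D (cls D (F x)) (cls D (F y))"
        by (rule F_tprod[OF gcC gcD gf w(1)]) (use x y cls_sub[of C] F_cls[OF gcC gcD gf] in auto)
      moreover have "Z = cls D (F w)" using w F_tmap[OF gcC gcD gf wc] by simp
      ultimately show "Z \<in> cls D ` tprod D (cls D (F x)) (cls D (F y))" by blast
    qed
    show "cls D ` tprod D (cls D (F x)) (cls D (F y)) \<subseteq> tmap C D F ` cls C ` tprod C X Y"
    proof
      fix Z assume "Z \<in> cls D ` tprod D (cls D (F x)) (cls D (F y))"
      then obtain v where v: "v \<in> tprod D (cls D (F x)) (cls D (F y))" "Z = cls D v" by blast
      have vc: "v \<in> carrier D" using v subD by blast
      have GX: "G ` cls D (F x) \<subseteq> X"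
        using F_cls[OF gcD gcC gg, of "F x"] simC[OF x(1)] x by simp
      have GY: "G ` cls D (F y) \<subseteq> Y"
        using F_cls[OF gcD gcC gg, of "F y"] simC[OF y(1)] y by simp
      have "G v \<in> tprod C X Y"
        by (rule F_tprod[OF gcD gcC gg v(1) cls_sub cls_sub GX GY])
      moreover have "Z = tmap C D F (cls C (G v))"
        using v F_tmap[OF gcC gcD gf] F_in[OF gcD gcC gg vc] simD[OF vc] by simp
      ultimately show "Z \<in> tmap C D F ` cls C ` tprod C X Y" by blast
    qed
  qed
qed

theorem mainTheorem9:
  fixes C :: "'a gcat" and D :: "'b gcat"
  assumes "gencat C" and "gencat D"
  shows "((\<exists>F G. gfunctor C D F \<and> gfunctor D C G \<and>
            (\<forall>X\<in>classes C. tmap D C G (tmap C D F X) = X) \<and>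
            (\<forall>Y\<in>classes D. tmap C D F (tmap D C G Y) = Y))
          \<longleftrightarrow>
          (\<exists>F G. gfunctor C D F \<and> gfunctor D C G \<and>
            nat_iso D D (F \<circ> G) id \<and> nat_iso C C (G \<circ> F) id))
       \<and> ((\<exists>F G. gfunctor C D F \<and> gfunctor D C G \<and>
            (\<forall>X\<in>classes C. tmap D C G (tmap C D F X) = X) \<and>
            (\<forall>Y\<in>classes D. tmap C D F (tmap D C G Y) = Y))
          \<longrightarrow> tilde_iso C D)"
proof (intro conjI iffI impI)
  assume "\<exists>F G. gfunctor C D F \<and> gfunctor D C G \<and>
            (\<forall>X\<in>classes C. tmap D C G (tmap C D F X) = X) \<and>
            (\<forall>Y\<in>classes D. tmap C D F (tmap D C G Y) = Y)"
  then obtain F where "\<exists>G. (gfunctor C D F) \<and> (gfunctor D C G) \<and> (\<forall>X\<in>classes C. tmap D C G (tmap C D F X) = X) \<and> (\<forall>Y\<in>classes D. tmap C D F (tmap D C G Y) = Y)" ..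
  then obtain G where hh: "(gfunctor C D F) \<and> (gfunctor D C G) \<and> (\<forall>X\<in>classes C. tmap D C G (tmap C D F X) = X) \<and> (\<forall>Y\<in>classes D. tmap C D F (tmap D C G Y) = Y)" ..
  note h = hh[THEN conjunct1] hh[THEN conjunct2, THEN conjunct1] hh[THEN conjunct2, THEN conjunct2, THEN conjunct1] hh[THEN conjunct2, THEN conjunct2, THEN conjunct2]
  have n1: "nat_iso C C (G \<circ> F) id"
    by (rule natiso_iff[OF assms h(1,2), THEN iffD2]) (use key1[OF assms h(1,2,3)] in blast)
  have n2: "nat_iso D D (F \<circ> G) id"
    by (rule natiso_iff[OF assms(2,1) h(2,1), THEN iffD2]) (use key1[OF assms(2,1) h(2,1,4)] in blast)
  show "\<exists>F G. gfunctor C D F \<and> gfunctor D C G \<and>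
            nat_iso D D (F \<circ> G) id \<and> nat_iso C C (G \<circ> F) id"
    by (rule exI[of _ F], rule exI[of _ G]) (intro conjI h(1) h(2) n1 n2)
next
  assume "\<exists>F G. gfunctor C D F \<and> gfunctor D C G \<and>
            nat_iso D D (F \<circ> G) id \<and> nat_iso C C (G \<circ> F) id"
  then obtain F where "\<exists>G. (gfunctor C D F) \<and> (gfunctor D C G) \<and> (nat_iso D D (F \<circ> G) id) \<and> (nat_iso C C (G \<circ> F) id)" ..
  then obtain G where hh: "(gfunctor C D F) \<and> (gfunctor D C G) \<and> (nat_iso D D (F \<circ> G) id) \<and> (nat_iso C C (G \<circ> F) id)" ..
  note h = hh[THEN conjunct1] hh[THEN conjunct2, THEN conjunct1] hh[THEN conjunct2, THEN conjunct2, THEN conjunct1] hh[THEN conjunct2, THEN conjunct2, THEN conjunct2]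
  have n1: "\<forall>X\<in>classes C. tmap D C G (tmap C D F X) = X"
    by (rule key2[OF assms h(1,2)], rule natiso_iff[OF assms h(1,2), THEN iffD1, OF h(4)])
  have n2: "\<forall>Y\<in>classes D. tmap C D F (tmap D C G Y) = Y"
    by (rule key2[OF assms(2,1) h(2,1)], rule natiso_iff[OF assms(2,1) h(2,1), THEN iffD1, OF h(3)])
  show "\<exists>F G. gfunctor C D F \<and> gfunctor D C G \<and>
            (\<forall>X\<in>classes C. tmap D C G (tmap C D F X) = X) \<and>
            (\<forall>Y\<in>classes D. tmap C D F (tmap D C G Y) = Y)"
    by (rule exI[of _ F], rule exI[of _ G]) (intro conjI h(1) h(2) n1 n2)
next
  assume "\<exists>F G. gfunctor C D F \<and> gfunctor D C G \<and>
            (\<forall>X\<in>classes C. tmap D C G (tmap C D F X) = X) \<and>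
            (\<forall>Y\<in>classes D. tmap C D F (tmap D C G Y) = Y)"
  then obtain F where "\<exists>G. (gfunctor C D F) \<and> (gfunctor D C G) \<and> (\<forall>X\<in>classes C. tmap D C G (tmap C D F X) = X) \<and> (\<forall>Y\<in>classes D. tmap C D F (tmap D C G Y) = Y)" ..
  then obtain G where hh: "(gfunctor C D F) \<and> (gfunctor D C G) \<and> (\<forall>X\<in>classes C. tmap D C G (tmap C D F X) = X) \<and> (\<forall>Y\<in>classes D. tmap C D F (tmap D C G Y) = Y)" ..
  note h = hh[THEN conjunct1] hh[THEN conjunct2, THEN conjunct1] hh[THEN conjunct2, THEN conjunct2, THEN conjunct1] hh[THEN conjunct2, THEN conjunct2, THEN conjunct2]
  show "tilde_iso C D" using tilde[OF assms h] .
qed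

end
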